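(* The linear map $\Theta:\mathbf H_o\to\mathbf{FQSym}$ defined on ordered forests by $\Theta(\mathbb F)=\sum_{\sigma\in S_{\mathbb F}}\sigma$ is a morphism of Hopf algebras, homogeneous of degree $0$.
   Context: A rooted forest is a finite graph each of whose components is a tree with a distinguished root; edges are oriented towards the roots, and for distinct vertices $v,w$ we write $v\twoheadrightarrow w$ if there is an oriented path from $v$ to $w$. An ordered forest with $n$ vertices is a rooted forest with a total order on its vertices, identifying the vertex set with $\{1,\dots,n\}$ (isomorphic ordered forests are identified). $\mathbf H_o$ is the $K$-vector space ($K=\mathbb R$ or $\mathbb C$) with basis all ordered forests, including the empty forest $1$, graded by number of vertices, with product $\mathbb F\mathbb G$ = disjoint union where the vertices of $\mathbb F$ (with $k$ vertices) keep labels $1..k$ and vertex $j$ of $\mathbb G$ gets label $k+j$, and coproduct $\Delta(\mathbb F)=\sum_{\vec v\models V(\mathbb F)}\mathrm{Roo}_{\vec v}\mathbb F\otimes\mathrm{Lea}_{\vec v}\mathbb F$, where an admissible cut $\vec v$ is a (possibly empty) set of vertices no two of which satisfy $v\twoheadrightarrow w$, $\mathrm{Lea}_{\vec v}\mathbb F$ is the subforest on $\vec v\cup\{w:\exists v\in\vec v, w\twoheadrightarrow v\}$, $\mathrm{Roo}_{\vec v}\mathbb F$ is the subforest on the remaining vertices, both ordered by restriction. $\Sigma_n$ is the symmetric group with $(\sigma\circ\tau)(i)=\sigma(\tau(i))$; for $\sigma\in\Sigma_k,\tau\in\Sigma_l$, $(\sigma\otimes\tau)(i)=\sigma(i)$ ($i\le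 k$), $=k+\tau(i-k)$ ($i>k$). $Sh(k,l)=\{\zeta\in\Sigma_{k+l}:\zeta^{-1}(1)<\dots<\zeta^{-1}(k),\ \zeta^{-1}(k+1)<\dots<\zeta^{-1}(k+l)\}$. $\mathbf{FQSym}$ is the graded vector space with basis $\bigsqcup_{n\ge0}\Sigma_n$ (degree $n$ for $\Sigma_n$; the element of $\Sigma_0$ is the unit $1$), product $\sigma\cdot\tau=\sum_{\epsilon\in Sh(k,l)}(\sigma\otimes\tau)\circ\epsilon$ for $\sigma\in\Sigma_k,\tau\in\Sigma_l$, and coproduct $\Delta(\sigma)=\sum_{k=0}^n\sigma_1^{(k)}\otimes\sigma_2^{(k)}$ for $\sigma\in\Sigma_n$, where $\sigma_1^{(k)}$, $\sigma_2^{(k)}$ are the standardizations of the words $(\sigma(1),\dots,\sigma(k))$ and $(\sigma(k+1),\dots,\sigma(n))$ (standardization replaces the letters by $1,2,\dots$ preserving their relative order); equivalently $\sigma=\zeta^{-1}\circ(\sigma_1^{(k)}\otimes\sigma_2^{(k)})$ with $\zeta\in Sh(k,n-k)$. For an ordered forest $\mathbb F$ with $n$ vertices, $S_{\mathbb F}$ is the set of $\sigma\in\Sigma_n$ such that $i\twoheadrightarrow j$ implies $\sigma^{-1}(i)>\sigma^{-1}(j)$. *)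

theory Defs
  imports Complex_Main
begin

text \<open>Vertices of an ordered forest with n vertices and letters of a
permutation in Sigma_n are indexed 0..n-1 (instead of 1..n).
An ordered forest with n vertices is encoded by the list of length n whose i-th entry
is the parent of vertex i (None for a root).  Since isomorphic ordered forests are
identified and the vertex set is identified with the ordered set of labels, this list
determines the ordered forest uniquely.
A permutation sigma in Sigma_n is encoded by its word [sigma(0),...,sigma(n-1)].
Vectors of a vector space with basis B over K are finitely supported functions B => K;
the tensor product of two such spaces has basis the pairs of basis elements.\<close>

type_synonym oforest = "nat option list"
type_synonym perm_word = "nat list"

definition edges :: "oforest \<Rightarrow> (nat \<times> nat) set" where
  "edges F = {(i, j). i < length F \<and> F ! i = Some j}"

definition reach :: "oforest \<Rightarrow> nat \<Rightarrow> nat \<Rightarrow> bool" where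
  "reach F v w \<longleftrightarrow> v \<noteq> w \<and> (v, w) \<in> (edges F)\<^sup>+"

definition valid_forest :: "oforest \<Rightarrow> bool" where
  "valid_forest F \<longleftrightarrow>
     (\<forall>i < length F. \<forall>j. F ! i = Some j \<longrightarrow> j < length F) \<and>
     (\<forall>v. (v, v) \<notin> (edges F)\<^sup>+)"

definition forest_prod :: "oforest \<Rightarrow> oforest \<Rightarrow> oforest" where
  "forest_prod F G = F @ map (map_option (\<lambda>j. j + length F)) G"

definition admissible_cut :: "oforest \<Rightarrow> nat set \<Rightarrow> bool" where
  "admissible_cut F C \<longleftrightarrow> C \<subseteq> {0..<length F} \<and> (\<forall>v\<in>C. \<forall>w\<in>C. \<not> reach F v w)"

definition lea_set :: "oforest \<Rightarrow> nat set \<Rightarrow> nat set" where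
  "lea_set F C = C \<union> {w. \<exists>v\<in>C. reach F w v}"

definition roo_set :: "oforest \<Rightarrow> nat set \<Rightarrow> nat set" where
  "roo_set F C = {0..<length F} - lea_set F C"

text \<open>new label of vertex w in the subforest on S (order by restriction)\<close>
definition relabel :: "nat set \<Rightarrow> nat \<Rightarrow> nat" where
  "relabel S w = card {u \<in> S. u < w}"

definition subforest :: "oforest \<Rightarrow> nat set \<Rightarrow> oforest" where
  "subforest F S = map (\<lambda>v. case F ! v of
        None \<Rightarrow> None
      | Some w \<Rightarrow> (if w \<in> S then Some (relabel S w) else None)) (sorted_list_of_set S)"

definition Lea :: "oforest \<Rightarrow> nat set \<Rightarrow> oforest" where
  "Lea F C = subforest F (lea_set F C)"

definition Roo :: "oforest \<Rightarrow> nat set \<Rightarrow> oforest" where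
  "Roo F C = subforest F (roo_set F C)"

definition valid_perm :: "perm_word \<Rightarrow> bool" where
  "valid_perm s \<longleftrightarrow> distinct s \<and> set s = {0..<length s}"

definition perm_tensor :: "perm_word \<Rightarrow> perm_word \<Rightarrow> perm_word" where
  "perm_tensor s t = s @ map (\<lambda>x. x + length s) t"

text \<open>composition sigma o tau as a word: i \<mapsto> sigma(tau(i))\<close>
definition perm_comp :: "perm_word \<Rightarrow> perm_word \<Rightarrow> perm_word" where
  "perm_comp s t = map (\<lambda>j. s ! j) t"

definition is_shuffle :: "nat \<Rightarrow> nat \<Rightarrow> perm_word \<Rightarrow> bool" where
  "is_shuffle k l e \<longleftrightarrow> valid_perm e \<and> length e = k + l \<and>
     filter (\<lambda>x. x < k) e = [0..<k] \<and> filter (\<lambda>x. k \<le> x) e = [k..<k+l]"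

definition standardize :: "nat list \<Rightarrow> perm_word" where
  "standardize w = map (\<lambda>x. card {y \<in> set w. y < x}) w"

definition supp :: "('b \<Rightarrow> 'k::zero) \<Rightarrow> 'b set" where
  "supp x = {b. x b \<noteq> 0}"

definition basis_vec :: "'b \<Rightarrow> 'b \<Rightarrow> 'k::{zero,one}" where
  "basis_vec b = (\<lambda>c. if c = b then 1 else 0)"

definition lin :: "('a \<Rightarrow> 'b \<Rightarrow> 'k::comm_ring_1) \<Rightarrow> ('a \<Rightarrow> 'k) \<Rightarrow> ('b \<Rightarrow> 'k)" where
  "lin f x = (\<lambda>c. \<Sum>a\<in>supp x. x a * f a c)"

definition bilin :: "('a \<Rightarrow> 'a \<Rightarrow> 'b \<Rightarrow> 'k::comm_ring_1) \<Rightarrow> ('a \<Rightarrow> 'k) \<Rightarrow> ('a \<Rightarrow> 'k) \<Rightarrow> ('b \<Rightarrow> 'k)" where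
  "bilin m x y = (\<lambda>c. \<Sum>(a, b)\<in>supp x \<times> supp y. x a * y b * m a b c)"

definition tensor_map :: "('a \<Rightarrow> 'b \<Rightarrow> 'k::comm_ring_1) \<Rightarrow> ('a \<Rightarrow> 'b \<Rightarrow> 'k) \<Rightarrow>
    ('a \<times> 'a \<Rightarrow> 'k) \<Rightarrow> ('b \<times> 'b \<Rightarrow> 'k)" where
  "tensor_map f g = lin (\<lambda>(a, a') (b, b'). f a b * g a' b')"

definition Ho_elem :: "(oforest \<Rightarrow> 'k::comm_ring_1) \<Rightarrow> bool" where
  "Ho_elem x \<longleftrightarrow> finite (supp x) \<and> supp x \<subseteq> {F. valid_forest F}"

definition Ho_mult_basis :: "oforest \<Rightarrow> oforest \<Rightarrow> oforest \<Rightarrow> 'k::comm_ring_1" where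
  "Ho_mult_basis F G = basis_vec (forest_prod F G)"

definition Ho_mult :: "(oforest \<Rightarrow> 'k::comm_ring_1) \<Rightarrow> (oforest \<Rightarrow> 'k) \<Rightarrow> (oforest \<Rightarrow> 'k)" where
  "Ho_mult = bilin Ho_mult_basis"

definition Ho_unit :: "oforest \<Rightarrow> 'k::comm_ring_1" where
  "Ho_unit = basis_vec []"

definition Ho_counit :: "(oforest \<Rightarrow> 'k::comm_ring_1) \<Rightarrow> 'k" where
  "Ho_counit x = x []"

definition Ho_coprod_basis :: "oforest \<Rightarrow> oforest \<times> oforest \<Rightarrow> 'k::comm_ring_1" where
  "Ho_coprod_basis F = (\<lambda>(A, B). of_nat (card {C. admissible_cut F C \<and>
       Roo F C = A \<and> Lea F C = B}))"

definition Ho_coprod :: "(oforest \<Rightarrow> 'k::comm_ring_1) \<Rightarrow> (oforest \<times> oforest \<Rightarrow> 'k)" where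
  "Ho_coprod = lin Ho_coprod_basis"

definition FQ_mult_basis :: "perm_word \<Rightarrow> perm_word \<Rightarrow> perm_word \<Rightarrow> 'k::comm_ring_1" where
  "FQ_mult_basis s t = (\<lambda>c. of_nat (card {e. is_shuffle (length s) (length t) e \<and>
       perm_comp (perm_tensor s t) e = c}))"

definition FQ_mult :: "(perm_word \<Rightarrow> 'k::comm_ring_1) \<Rightarrow> (perm_word \<Rightarrow> 'k) \<Rightarrow> (perm_word \<Rightarrow> 'k)" where
  "FQ_mult = bilin FQ_mult_basis"

definition FQ_unit :: "perm_word \<Rightarrow> 'k::comm_ring_1" where
  "FQ_unit = basis_vec []"

definition FQ_counit :: "(perm_word \<Rightarrow> 'k::comm_ring_1) \<Rightarrow> 'k" where
  "FQ_counit x = x []"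

definition FQ_coprod_basis :: "perm_word \<Rightarrow> perm_word \<times> perm_word \<Rightarrow> 'k::comm_ring_1" where
  "FQ_coprod_basis s = (\<lambda>(a, b). of_nat (card {k. k \<le> length s \<and>
       standardize (take k s) = a \<and> standardize (drop k s) = b}))"

definition FQ_coprod :: "(perm_word \<Rightarrow> 'k::comm_ring_1) \<Rightarrow> (perm_word \<times> perm_word \<Rightarrow> 'k)" where
  "FQ_coprod = lin FQ_coprod_basis"

definition S_F :: "oforest \<Rightarrow> perm_word set" where
  "S_F F = {s. valid_perm s \<and> length s = length F \<and>
     (\<forall>i j p q. reach F i j \<longrightarrow> p < length s \<longrightarrow> q < length s \<longrightarrow>
         s ! p = i \<longrightarrow> s ! q = j \<longrightarrow> q < p)}"

definition Theta_basis :: "oforest \<Rightarrow> perm_word \<Rightarrow> 'k::comm_ring_1" where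
  "Theta_basis F = (\<lambda>s. if s \<in> S_F F then 1 else 0)"

definition Theta :: "(oforest \<Rightarrow> 'k::comm_ring_1) \<Rightarrow> (perm_word \<Rightarrow> 'k)" where
  "Theta = lin Theta_basis"

text \<open>Theta is a morphism of Hopf algebras (= of bialgebras: product, unit, coproduct,
counit are preserved; the antipode is then automatically preserved), homogeneous of
degree 0, over the scalar type 'k.\<close>
definition Theta_Hopf_morphism :: "'k::comm_ring_1 itself \<Rightarrow> bool" where
  "Theta_Hopf_morphism _ \<longleftrightarrow>
     (\<forall>x y :: oforest \<Rightarrow> 'k. Ho_elem x \<longrightarrow> Ho_elem y \<longrightarrow>
        Theta (Ho_mult x y) = FQ_mult (Theta x) (Theta y)) \<and>
     Theta (Ho_unit :: oforest \<Rightarrow> 'k) = FQ_unit \<and>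
     (\<forall>x :: oforest \<Rightarrow> 'k. Ho_elem x \<longrightarrow>
        FQ_coprod (Theta x) = tensor_map Theta_basis Theta_basis (Ho_coprod x)) \<and>
     (\<forall>x :: oforest \<Rightarrow> 'k. Ho_elem x \<longrightarrow> FQ_counit (Theta x) = Ho_counit x) \<and>
     (\<forall>(x :: oforest \<Rightarrow> 'k) n. Ho_elem x \<longrightarrow> (\<forall>F\<in>supp x. length F = n) \<longrightarrow>
        (\<forall>s\<in>supp (Theta x). length s = n))"

end

theory Submission
  imports Defs
begin


fun idx :: "'a list \<Rightarrow> 'a \<Rightarrow> nat" where
  "idx [] x = 0"
| "idx (z # w) x = (if z = x then 0 else Suc (idx w x))"

lemma idx_less: "x \<in> set w \<Longrightarrow> idx w x < length w"
  by (induction w) auto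

lemma nth_idx: "x \<in> set w \<Longrightarrow> w ! idx w x = x"
  by (induction w) auto

lemma idx_nth: "distinct w \<Longrightarrow> i < length w \<Longrightarrow> idx w (w ! i) = i"
proof (induction w arbitrary: i)
  case Nil then show ?case by simp
next
  case (Cons z w) then show ?case
    by (cases i) (auto simp: in_set_conv_nth)
qed

lemma idx_append: "idx (xs @ ys) x = (if x \<in> set xs then idx xs x else length xs + idx ys x)"
  by (induction xs) auto

lemma idx_map: "inj_on f (set w) \<Longrightarrow> x \<in> set w \<Longrightarrow> idx (map f w) (f x) = idx w x"
proof (induction w)
  case Nil then show ?case by simp
next
  case (Cons z w)
  show ?case
  proof (cases "z = x")
    case True then show ?thesis by simp
  next
    case False
    then have "f z \<noteq> f x" using Cons.prems by (auto simp: inj_on_def)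
    then show ?thesis using Cons False by auto
  qed
qed

lemma idx_inj: "x \<in> set w \<Longrightarrow> y \<in> set w \<Longrightarrow> idx w x = idx w y \<Longrightarrow> x = y"
  by (metis nth_idx)

lemma idx_filter:
  assumes "P x" "P y" "x \<in> set w" "y \<in> set w"
  shows "(idx (filter P w) x < idx (filter P w) y) = (idx w x < idx w y)"
  using assms by (induction w) auto

definition resp :: "oforest \<Rightarrow> nat list \<Rightarrow> bool" where
  "resp F w \<longleftrightarrow> (\<forall>x\<in>set w. \<forall>y\<in>set w. reach F x y \<longrightarrow> idx w y < idx w x)"

lemma S_F_alt: "S_F F = {s. valid_perm s \<and> length s = length F \<and> resp F s}"
proof -
  have "(\<forall>i j p q. reach F i j \<longrightarrow> p < length s \<longrightarrow> q < length s \<longrightarrow>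
         s ! p = i \<longrightarrow> s ! q = j \<longrightarrow> q < p) = resp F s" if "valid_perm s" for s
  proof
    assume A: "\<forall>i j p q. reach F i j \<longrightarrow> p < length s \<longrightarrow> q < length s \<longrightarrow>
         s ! p = i \<longrightarrow> s ! q = j \<longrightarrow> q < p"
    show "resp F s" unfolding resp_def
      using A idx_less nth_idx by metis
  next
    assume "resp F s"
    then show "\<forall>i j p q. reach F i j \<longrightarrow> p < length s \<longrightarrow> q < length s \<longrightarrow>
         s ! p = i \<longrightarrow> s ! q = j \<longrightarrow> q < p"
      unfolding resp_def using that unfolding valid_perm_def
      by (metis idx_nth nth_mem)
  qed
  then show ?thesis unfolding S_F_def by blast
qed

lemma resp_map:
  assumes "inj_on f (set w)" "\<And>x y. x \<in> set w \<Longrightarrow> y \<in> set w \<Longrightarrow> reach G (f x) (f y) = reach F x y"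
  shows "resp G (map f w) = resp F w"
  unfolding resp_def using assms idx_map by fastforce

lemma resp_append:
  assumes "distinct (xs @ ys)"
  shows "resp F (xs @ ys) = (resp F xs \<and> resp F ys \<and> (\<forall>x\<in>set xs. \<forall>y\<in>set ys. \<not> reach F x y))"
proof -
  have d: "set xs \<inter> set ys = {}" using assms by auto
  show ?thesis
    unfolding resp_def idx_append using d idx_less
    apply (auto)
    apply fastforce+
    done
qed

lemma resp_filter: "resp F w \<Longrightarrow> resp F (filter P w)"
  unfolding resp_def using idx_filter by (metis mem_Collect_eq set_filter)

abbreviation sl :: "nat set \<Rightarrow> nat list" where "sl S \<equiv> sorted_list_of_set S"

lemma card_less_idx: "sorted l \<Longrightarrow> distinct l \<Longrightarrow> x \<in> set l \<Longrightarrow> card {u \<in> set l. u < x} = idx l x"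
proof (induction l)
  case Nil then show ?case by simp
next
  case (Cons z l)
  show ?case
  proof (cases "z = x")
    case True
    then have "{u \<in> set (z # l). u < x} = {}" using Cons.prems by auto
    then show ?thesis using True by simp
  next
    case False
    then have "z < x" using Cons.prems by auto
    then have "{u \<in> set (z # l). u < x} = insert z {u \<in> set l. u < x}" by auto
    moreover have "z \<notin> {u \<in> set l. u < x}" using Cons.prems by auto
    ultimately show ?thesis using Cons False by simp
  qed
qed

lemma relabel_idx: "finite S \<Longrightarrow> x \<in> S \<Longrightarrow> relabel S x = idx (sl S) x"
  unfolding relabel_def using card_less_idx[of "sl S" x] by simp

lemma relabel_less: "finite S \<Longrightarrow> x \<in> S \<Longrightarrow> relabel S x < card S"
proof -
  assume a: "finite S" "x \<in> S"
  have "idx (sl S) x < length (sl S)" using a by (intro idx_less) simp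
  then show ?thesis using a relabel_idx by simp
qed

lemma sl_relabel: "finite S \<Longrightarrow> x \<in> S \<Longrightarrow> sl S ! relabel S x = x"
  by (simp add: relabel_idx nth_idx)

lemma relabel_sl: "finite S \<Longrightarrow> i < card S \<Longrightarrow> relabel S (sl S ! i) = i"
proof -
  assume a: "finite S" "i < card S"
  have m: "sl S ! i \<in> S" using a by (metis length_sorted_list_of_set nth_mem set_sorted_list_of_set)
  show ?thesis using a by (simp add: relabel_idx[OF a(1) m] idx_nth)
qed

lemma relabel_inj: "finite S \<Longrightarrow> inj_on (relabel S) S"
  by (metis inj_onI sl_relabel)

lemma relabel_image: "finite S \<Longrightarrow> relabel S ` S = {0..<card S}"
  apply (auto simp: relabel_less)
  by (metis image_eqI length_sorted_list_of_set nth_mem relabel_sl set_sorted_list_of_set)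



lemma standardize_relabel: "standardize w = map (relabel (set w)) w"
  unfolding standardize_def relabel_def by simp

definition unstd :: "nat set \<Rightarrow> nat list \<Rightarrow> nat list" where
  "unstd S a = map (\<lambda>i. sl S ! i) a"

lemma valid_perm_std: "distinct w \<Longrightarrow> valid_perm (standardize w) \<and> length (standardize w) = length w"
  unfolding valid_perm_def standardize_relabel
  using relabel_inj[of "set w"] relabel_image[of "set w"]
  by (simp add: distinct_map distinct_card)

lemma unstd_std: "distinct w \<Longrightarrow> unstd (set w) (standardize w) = w"
  unfolding unstd_def standardize_relabel by (simp add: map_idI sl_relabel)

lemma set_unstd: "finite S \<Longrightarrow> valid_perm a \<Longrightarrow> length a = card S \<Longrightarrow> set (unstd S a) = S"
proof -
  assume a: "finite S" "valid_perm a" "length a = card S"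
  have "set (unstd S a) = (\<lambda>i. sl S ! i) ` {0..<length (sl S)}"
    using a unfolding unstd_def valid_perm_def by simp
  also have "\<dots> = set (sl S)" by (auto simp: in_set_conv_nth)
  finally show ?thesis using a by simp
qed

lemma distinct_unstd: "finite S \<Longrightarrow> valid_perm a \<Longrightarrow> length a = card S \<Longrightarrow> distinct (unstd S a)"
  unfolding unstd_def valid_perm_def
  by (auto simp: distinct_map inj_on_def nth_eq_iff_index_eq)

lemma std_unstd: "finite S \<Longrightarrow> valid_perm a \<Longrightarrow> length a = card S \<Longrightarrow> standardize (unstd S a) = a"
proof -
  assume a: "finite S" "valid_perm a" "length a = card S"
  have "standardize (unstd S a) = map (\<lambda>i. relabel S (sl S ! i)) a"
    unfolding standardize_relabel set_unstd[OF a] unfolding unstd_def by simp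
  also have "\<dots> = a" using a unfolding valid_perm_def by (auto intro!: map_idI simp: relabel_sl)
  finally show ?thesis .
qed



lemma trancl_closed:
  assumes "(u, v) \<in> R\<^sup>+" "u \<in> A" "\<And>a b. (a, b) \<in> R \<Longrightarrow> a \<in> A \<Longrightarrow> b \<in> A"
  shows "v \<in> A"
  using assms(1,2) by (induction rule: trancl_induct) (auto intro: assms(3))

lemma trancl_bounded:
  assumes "valid_forest F" "(u, v) \<in> (edges F)\<^sup>+"
  shows "u < length F \<and> v < length F"
  using assms(2) by (induction rule: trancl_induct)
    (use assms(1) in \<open>auto simp: edges_def valid_forest_def\<close>)

lemma reach_iff: "valid_forest F \<Longrightarrow> reach F u v = ((u, v) \<in> (edges F)\<^sup>+)"
  unfolding reach_def valid_forest_def by auto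

lemma reach_trans: "valid_forest F \<Longrightarrow> reach F u v \<Longrightarrow> reach F v w \<Longrightarrow> reach F u w"
  by (simp add: reach_iff)

lemma reach_irrefl: "\<not> reach F u u"
  unfolding reach_def by simp

lemma reach_asym: "valid_forest F \<Longrightarrow> reach F u v \<Longrightarrow> \<not> reach F v u"
  by (metis reach_irrefl reach_trans)

lemma trancl_image_inj:
  assumes inj: "inj_on h A" and R: "R \<subseteq> A \<times> A"
  shows "(map_prod h h ` R)\<^sup>+ = map_prod h h ` (R\<^sup>+)"
proof
  have RA: "R\<^sup>+ \<subseteq> A \<times> A" using R by (metis trancl_subset_Sigma)
  show "(map_prod h h ` R)\<^sup>+ \<subseteq> map_prod h h ` (R\<^sup>+)"
  proof
    fix p assume "p \<in> (map_prod h h ` R)\<^sup>+"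
    then obtain x y where p: "p = (x, y)" and xy: "(x, y) \<in> (map_prod h h ` R)\<^sup>+" by (cases p) auto
    have "\<exists>a b. (a, b) \<in> R\<^sup>+ \<and> x = h a \<and> y = h b" using xy
    proof (induction rule: trancl_induct)
      case (base y) then show ?case by auto
    next
      case (step y z)
      then obtain a b where ab: "(a, b) \<in> R\<^sup>+" "x = h a" "y = h b" by auto
      from step(2) obtain b' c where bc: "(b', c) \<in> R" "y = h b'" "z = h c" by auto
      have "b \<in> A" "b' \<in> A" using ab bc RA R by auto
      then have "b = b'" using inj ab bc by (auto dest: inj_onD)
      then have "(a, c) \<in> R\<^sup>+" using ab bc by (meson trancl.trancl_into_trancl)
      then show ?case using ab bc by blast
    qed
    then show "p \<in> map_prod h h ` (R\<^sup>+)" using p by force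
  qed
next
  show "map_prod h h ` (R\<^sup>+) \<subseteq> (map_prod h h ` R)\<^sup>+"
  proof
    fix p assume "p \<in> map_prod h h ` (R\<^sup>+)"
    then obtain a b where p: "p = (h a, h b)" and ab: "(a, b) \<in> R\<^sup>+" by auto
    have "(h a, h b) \<in> (map_prod h h ` R)\<^sup>+" using ab
    proof (induction rule: trancl_induct)
      case (base y) then show ?case by (simp add: r_into_trancl' rev_image_eqI)
    next
      case (step y z)
      then have "(h y, h z) \<in> map_prod h h ` R" by force
      then show ?case using step(3) by (meson trancl.trancl_into_trancl)
    qed
    then show "p \<in> (map_prod h h ` R)\<^sup>+" using p by simp
  qed
qed

lemma length_subforest: "finite S \<Longrightarrow> length (subforest F S) = card S"
  unfolding subforest_def by simp

lemma edges_subforest: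
  assumes S: "S \<subseteq> {0..<length F}"
  shows "edges (subforest F S) = map_prod (relabel S) (relabel S) ` (edges F \<inter> S \<times> S)"
proof -
  have fin: "finite S" using S finite_subset by blast
  show ?thesis
  proof (intro set_eqI iffI)
    fix p assume "p \<in> edges (subforest F S)"
    then obtain i j where p: "p = (i, j)" and i: "i < card S" and ij: "subforest F S ! i = Some j"
      unfolding edges_def using length_subforest[OF fin] by auto
    define v where "v = sl S ! i"
    have v: "v \<in> S" unfolding v_def using fin i by (metis length_sorted_list_of_set nth_mem set_sorted_list_of_set)
    have rv: "relabel S v = i" unfolding v_def using relabel_sl fin i by simp
    have "(case F ! v of None \<Rightarrow> None | Some w \<Rightarrow> (if w \<in> S then Some (relabel S w) else None)) = Some j"
      using ij i fin unfolding subforest_def v_def by simp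
    then obtain w where w: "F ! v = Some w" "w \<in> S" "j = relabel S w"
      by (auto split: option.splits if_splits)
    have "(v, w) \<in> edges F" using w v S unfolding edges_def by auto
    then show "p \<in> map_prod (relabel S) (relabel S) ` (edges F \<inter> S \<times> S)"
      using p rv w v by force
  next
    fix p assume "p \<in> map_prod (relabel S) (relabel S) ` (edges F \<inter> S \<times> S)"
    then obtain v w where p: "p = (relabel S v, relabel S w)" and vw: "(v, w) \<in> edges F" "v \<in> S" "w \<in> S"
      by auto
    have i: "relabel S v < card S" using relabel_less fin vw by simp
    have "subforest F S ! relabel S v = Some (relabel S w)"
      unfolding subforest_def using i fin vw sl_relabel[OF fin vw(2)] by (simp add: edges_def)
    then show "p \<in> edges (subforest F S)"
      unfolding edges_def using p i length_subforest[OF fin] by simp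
  qed
qed

definition convex :: "oforest \<Rightarrow> nat set \<Rightarrow> bool" where
  "convex F S \<longleftrightarrow> (\<forall>x y u. x \<in> S \<longrightarrow> y \<in> S \<longrightarrow> (x, u) \<in> (edges F)\<^sup>+ \<longrightarrow> (u, y) \<in> (edges F)\<^sup>+ \<longrightarrow> u \<in> S)"

lemma trancl_restrict:
  assumes cv: "convex F S" and x: "x \<in> S" and y: "y \<in> S"
  shows "((x, y) \<in> (edges F \<inter> S \<times> S)\<^sup>+) = ((x, y) \<in> (edges F)\<^sup>+)"
proof
  assume "(x, y) \<in> (edges F \<inter> S \<times> S)\<^sup>+"
  then show "(x, y) \<in> (edges F)\<^sup>+" by (metis inf_le1 trancl_mono)
next
  assume "(x, y) \<in> (edges F)\<^sup>+"
  then show "(x, y) \<in> (edges F \<inter> S \<times> S)\<^sup>+" using x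
  proof (induction rule: converse_trancl_induct)
    case (base a) then show ?case using y by auto
  next
    case (step a z)
    have "z \<in> S" using cv step y unfolding convex_def by (meson r_into_trancl')
    then show ?case using step by (meson IntI SigmaI trancl_into_trancl2)
  qed
qed

lemma reach_subforest:
  assumes S: "S \<subseteq> {0..<length F}" and cv: "convex F S" and x: "x \<in> S" and y: "y \<in> S"
  shows "reach (subforest F S) (relabel S x) (relabel S y) = reach F x y"
proof -
  have fin: "finite S" using S finite_subset by blast
  have inj: "inj_on (relabel S) S" using relabel_inj fin by simp
  have "(edges (subforest F S))\<^sup>+ = map_prod (relabel S) (relabel S) ` ((edges F \<inter> S \<times> S)\<^sup>+)"
    unfolding edges_subforest[OF S] by (rule trancl_image_inj[OF inj]) auto
  moreover have "((relabel S x, relabel S y) \<in> map_prod (relabel S) (relabel S) ` ((edges F \<inter> S \<times> S)\<^sup>+))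
     = ((x, y) \<in> (edges F \<inter> S \<times> S)\<^sup>+)"
  proof
    assume "(relabel S x, relabel S y) \<in> map_prod (relabel S) (relabel S) ` ((edges F \<inter> S \<times> S)\<^sup>+)"
    then obtain a b where ab: "(a, b) \<in> (edges F \<inter> S \<times> S)\<^sup>+" "relabel S x = relabel S a" "relabel S y = relabel S b"
      by auto
    have "a \<in> S" "b \<in> S" using ab(1) by (metis inf_le2 trancl_subset_Sigma subsetD SigmaD1 SigmaD2)+
    then have "a = x" "b = y" using ab inj x y by (auto dest: inj_onD)
    then show "(x, y) \<in> (edges F \<inter> S \<times> S)\<^sup>+" using ab by simp
  qed force
  moreover have "(relabel S x \<noteq> relabel S y) = (x \<noteq> y)" using inj x y by (auto dest: inj_onD)
  ultimately show ?thesis unfolding reach_def using trancl_restrict[OF cv x y] by simp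
qed

lemma convex_up: "(\<And>a b. (a, b) \<in> edges F \<Longrightarrow> a \<in> S \<Longrightarrow> b \<in> S) \<Longrightarrow> convex F S"
  unfolding convex_def using trancl_closed by metis

lemma convex_down: "(\<And>a b. (a, b) \<in> edges F \<Longrightarrow> b \<in> S \<Longrightarrow> a \<in> S) \<Longrightarrow> convex F S"
proof -
  assume h: "\<And>a b. (a, b) \<in> edges F \<Longrightarrow> b \<in> S \<Longrightarrow> a \<in> S"
  have "u \<in> S" if "(u, y) \<in> (edges F)\<^sup>+" "y \<in> S" for u y
    using that(1,2) by (induction rule: converse_trancl_induct) (auto intro: h)
  then show ?thesis unfolding convex_def by blast
qed



lemma resp_cong: "(\<And>x y. x \<in> set w \<Longrightarrow> y \<in> set w \<Longrightarrow> reach F x y = reach G x y) \<Longrightarrow> resp F w = resp G w"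
  unfolding resp_def by auto

lemma map_idx_self: "distinct w \<Longrightarrow> map (idx w) w = [0..<length w]"
  by (rule nth_equalityI) (auto simp: idx_nth)

lemma idx_upt: "j < k \<Longrightarrow> idx [0..<k] j = j"
  using idx_nth[of "[0..<k]" j] by simp

lemma idx_upt2: "k \<le> j \<Longrightarrow> j < k + l \<Longrightarrow> idx [k..<k+l] j = j - k"
  using idx_nth[of "[k..<k+l]" "j - k"] by simp

context
  fixes F G :: oforest
  assumes vF: "valid_forest F" and vG: "valid_forest G"
begin


lemma len_H: "length (forest_prod F G) = (length F) + (length G)"
  unfolding forest_prod_def by simp

lemma H_nth1: "i < (length F) \<Longrightarrow> (forest_prod F G) ! i = F ! i"
  unfolding forest_prod_def by (simp add: nth_append)

lemma H_nth2: "j < (length G) \<Longrightarrow> (forest_prod F G) ! ((length F) + j) = map_option (\<lambda>x. x + (length F)) (G ! j)"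
  unfolding forest_prod_def by (simp add: nth_append)

lemma edges_H1: "(a, b) \<in> edges (forest_prod F G) \<Longrightarrow> a < (length F) \<Longrightarrow> b < (length F)"
  using vF unfolding edges_def valid_forest_def by (auto simp: H_nth1)

lemma edges_H2: "(a, b) \<in> edges (forest_prod F G) \<Longrightarrow> (length F) \<le> a \<Longrightarrow> (length F) \<le> b \<and> b < (length F) + (length G)"
proof -
  assume e: "(a, b) \<in> edges (forest_prod F G)" and a: "(length F) \<le> a"
  then have al: "a - (length F) < (length G)" "(forest_prod F G) ! a = Some b" unfolding edges_def len_H by auto
  have "(forest_prod F G) ! ((length F) + (a - (length F))) = map_option (\<lambda>x. x + (length F)) (G ! (a - (length F)))" using H_nth2 al by blast
  then obtain c where "G ! (a - (length F)) = Some c" "b = c + (length F)" using al a by (cases "G ! (a - length F)") auto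
  moreover have "c < (length G)" using vG al calculation unfolding valid_forest_def by blast
  ultimately show ?thesis by simp
qed

lemma reach_H_closed1: "reach (forest_prod F G) x y \<Longrightarrow> x < (length F) \<Longrightarrow> y < (length F)"
  unfolding reach_def using trancl_closed[of x y "edges (forest_prod F G)" "{..<(length F)}"] edges_H1 by auto

lemma reach_H_closed2: "reach (forest_prod F G) x y \<Longrightarrow> (length F) \<le> x \<Longrightarrow> (length F) \<le> y"
  unfolding reach_def using trancl_closed[of x y "edges (forest_prod F G)" "{(length F)..}"] edges_H2 by auto

lemma sub_H1: "subforest (forest_prod F G) {0..<(length F)} = F"
proof (rule nth_equalityI)
  show "length (subforest (forest_prod F G) {0..<(length F)}) = length F" by (simp add: length_subforest)
next
  fix i assume "i < length (subforest (forest_prod F G) {0..<(length F)})"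
  then have i: "i < (length F)" by (simp add: length_subforest)
  have rl: "relabel {0..<(length F)} w = w" if "w < (length F)" for w
  proof -
    have "{u \<in> {0..<(length F)}. u < w} = {0..<w}" using that by auto
    then show ?thesis unfolding relabel_def by simp
  qed
  show "subforest (forest_prod F G) {0..<(length F)} ! i = F ! i"
    unfolding subforest_def using i vF rl unfolding valid_forest_def
    by (auto simp: H_nth1 split: option.splits)
qed

lemma sub_H2: "subforest (forest_prod F G) {(length F)..<(length F)+(length G)} = G"
proof (rule nth_equalityI)
  show "length (subforest (forest_prod F G) {(length F)..<(length F)+(length G)}) = length G" by (simp add: length_subforest)
next
  fix i assume "i < length (subforest (forest_prod F G) {(length F)..<(length F)+(length G)})"
  then have i: "i < (length G)" by (simp add: length_subforest)
  have rl: "relabel {(length F)..<(length F)+(length G)} (w + (length F)) = w" if "w < (length G)" for w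
  proof -
    have "{u \<in> {(length F)..<(length F)+(length G)}. u < w + (length F)} = {(length F)..<w+(length F)}" using that by auto
    then show ?thesis unfolding relabel_def by simp
  qed
  have sl: "sorted_list_of_set {(length F)..<(length F)+(length G)} ! i = (length F) + i" using i by simp
  show "subforest (forest_prod F G) {(length F)..<(length F)+(length G)} ! i = G ! i"
    unfolding subforest_def using i vG rl unfolding valid_forest_def
    by (auto simp: sl H_nth2 split: option.splits)
qed

lemma reach_H1: "x < (length F) \<Longrightarrow> y < (length F) \<Longrightarrow> reach (forest_prod F G) x y = reach F x y"
proof -
  assume xy: "x < (length F)" "y < (length F)"
  have rl: "relabel {0..<(length F)} w = w" if "w < (length F)" for w
  proof -
    have "{u \<in> {0..<(length F)}. u < w} = {0..<w}" using that by auto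
    then show ?thesis unfolding relabel_def by simp
  qed
  have cv: "convex (forest_prod F G) {0..<(length F)}" by (rule convex_up) (auto dest: edges_H1)
  show ?thesis
    using reach_subforest[of "{0..<(length F)}" "forest_prod F G" x y] cv xy rl sub_H1 len_H by simp
qed

lemma reach_H2: "x < (length G) \<Longrightarrow> y < (length G) \<Longrightarrow> reach (forest_prod F G) (x + (length F)) (y + (length F)) = reach G x y"
proof -
  assume xy: "x < (length G)" "y < (length G)"
  have rl: "relabel {(length F)..<(length F)+(length G)} (w + (length F)) = w" if "w < (length G)" for w
  proof -
    have "{u \<in> {(length F)..<(length F)+(length G)}. u < w + (length F)} = {(length F)..<w+(length F)}" using that by auto
    then show ?thesis unfolding relabel_def by simp
  qed
  have cv: "convex (forest_prod F G) {(length F)..<(length F)+(length G)}" by (rule convex_up) (auto dest: edges_H2)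
  show ?thesis
    using reach_subforest[of "{(length F)..<(length F)+(length G)}" "forest_prod F G" "x+(length F)" "y+(length F)"] cv xy rl sub_H2 len_H by simp
qed

end



lemma tensor_facts:
  assumes s: "valid_perm s" "length s = k" and t: "valid_perm t" "length t = l"
  shows "valid_perm (perm_tensor s t)" "length (perm_tensor s t) = k + l"
    "\<And>j. j < k \<Longrightarrow> perm_tensor s t ! j = s ! j \<and> s ! j < k"
    "\<And>j. k \<le> j \<Longrightarrow> j < k + l \<Longrightarrow> perm_tensor s t ! j = t ! (j - k) + k \<and> k \<le> t ! (j - k) + k"
    "set (perm_tensor s t) = {0..<k+l}"
proof -
  have ss: "set s = {0..<k}" and st: "set t = {0..<l}" using s t unfolding valid_perm_def by auto
  show l: "length (perm_tensor s t) = k + l" using s t unfolding perm_tensor_def by simp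
  show se: "set (perm_tensor s t) = {0..<k+l}"
  proof -
    have "(\<lambda>x. x + k) ` {0..<l} = {k..<k+l}"
      by (auto simp: image_iff)
    then show ?thesis unfolding perm_tensor_def using ss st s(2) by auto
  qed
  show "valid_perm (perm_tensor s t)"
    unfolding valid_perm_def using s t ss st se l unfolding valid_perm_def perm_tensor_def
    by (auto simp: distinct_map inj_on_def)
  show "\<And>j. j < k \<Longrightarrow> perm_tensor s t ! j = s ! j \<and> s ! j < k"
    unfolding perm_tensor_def using s ss by (auto simp: nth_append)
  show "\<And>j. k \<le> j \<Longrightarrow> j < k + l \<Longrightarrow> perm_tensor s t ! j = t ! (j - k) + k \<and> k \<le> t ! (j - k) + k"
    unfolding perm_tensor_def using s t by (auto simp: nth_append)
qed

lemma shuffle_facts: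
  assumes "is_shuffle k l e"
  shows "set e = {0..<k+l}" "length e = k + l" "distinct e"
  using assms unfolding is_shuffle_def valid_perm_def by auto

context
  fixes F G :: oforest
  assumes vF: "valid_forest F" and vG: "valid_forest G"
begin

lemma T_data:
  assumes s: "s \<in> S_F F" and t: "t \<in> S_F G" and e: "is_shuffle (length s) (length t) e"
    and c: "perm_comp (perm_tensor s t) e = c"
  shows "s = filter (\<lambda>x. x < length F) c \<and> t = map (\<lambda>x. x - length F) (filter (\<lambda>x. length F \<le> x) c)"
proof -
  let ?k = "length F" and ?l = "length G"
  have s': "valid_perm s" "length s = ?k" and t': "valid_perm t" "length t = ?l"
    using s t unfolding S_F_def by auto
  note tf = tensor_facts[OF s' t']
  let ?h = "\<lambda>j. perm_tensor s t ! j"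
  have ce: "c = map ?h e" using c unfolding perm_comp_def by simp
  have e': "set e = {0..<?k+?l}" using shuffle_facts[OF e] s' t' by simp
  have f1: "filter (\<lambda>x. x < ?k) e = [0..<?k]" and f2: "filter (\<lambda>x. ?k \<le> x) e = [?k..<?k+?l]"
    using e s' t' unfolding is_shuffle_def by auto
  have hk: "(?h j < ?k) = (j < ?k)" if "j \<in> set e" for j
  proof (cases "j < ?k")
    case True then show ?thesis using tf(3) by simp
  next
    case False then show ?thesis using tf(4)[of j] that e' by simp
  qed
  have "filter (\<lambda>x. x < ?k) c = map ?h (filter (\<lambda>j. ?h j < ?k) e)"
    unfolding ce filter_map o_def ..
  also have "filter (\<lambda>j. ?h j < ?k) e = filter (\<lambda>x. x < ?k) e"
    using hk by (intro filter_cong) auto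
  also have "map ?h (filter (\<lambda>x. x < ?k) e) = map ?h [0..<?k]" using f1 by simp
  also have "map ?h [0..<?k] = s"
    using tf(3) s' by (intro nth_equalityI) auto
  finally have 1: "s = filter (\<lambda>x. x < ?k) c" by simp
  have "filter (\<lambda>x. ?k \<le> x) c = map ?h (filter (\<lambda>j. ?k \<le> ?h j) e)"
    unfolding ce filter_map o_def ..
  also have "filter (\<lambda>j. ?k \<le> ?h j) e = filter (\<lambda>x. ?k \<le> x) e"
    using hk by (intro filter_cong) (auto simp: not_less[symmetric])
  finally have "map (\<lambda>x. x - ?k) (filter (\<lambda>x. ?k \<le> x) c) = map (\<lambda>x. x - ?k) (map ?h [?k..<?k+?l])"
    using f2 by simp
  also have "map (\<lambda>x. x - ?k) (map ?h [?k..<?k+?l]) = t"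
    using tf(4) t' by (intro nth_equalityI) auto
  finally have 2: "t = map (\<lambda>x. x - ?k) (filter (\<lambda>x. ?k \<le> x) c)" by simp
  show ?thesis using 1 2 by simp
qed

lemma T_unique:
  assumes s: "s \<in> S_F F" and t: "t \<in> S_F G" and e: "is_shuffle (length s) (length t) e"
    and c: "perm_comp (perm_tensor s t) e = c"
    and e2: "is_shuffle (length s) (length t) e'" and c2: "perm_comp (perm_tensor s t) e' = c"
  shows "e = e'"
proof -
  have s': "valid_perm s" and t': "valid_perm t" using s t unfolding S_F_def by auto
  note tf = tensor_facts[OF s' refl t' refl]
  have "map (\<lambda>j. perm_tensor s t ! j) e = map (\<lambda>j. perm_tensor s t ! j) e'"
    using c c2 unfolding perm_comp_def by simp
  moreover have "inj_on (\<lambda>j. perm_tensor s t ! j) (set e \<union> set e')"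
    using shuffle_facts[OF e] shuffle_facts[OF e2] tf(1,2) unfolding valid_perm_def
    by (simp add: inj_on_nth)
  ultimately show ?thesis using map_inj_on by blast
qed

end



context
  fixes F G :: oforest
  assumes vF: "valid_forest F" and vG: "valid_forest G"
begin

lemma T_in:
  assumes s: "s \<in> S_F F" and t: "t \<in> S_F G" and e: "is_shuffle (length s) (length t) e"
    and c: "perm_comp (perm_tensor s t) e = c"
  shows "c \<in> S_F (forest_prod F G)"
proof -
  let ?k = "length F" and ?l = "length G"
  have s': "valid_perm s" "length s = ?k" "resp F s" and t': "valid_perm t" "length t = ?l" "resp G t"
    using s t unfolding S_F_alt by auto
  note tf = tensor_facts[OF s'(1,2) t'(1,2)]
  let ?h = "\<lambda>j. perm_tensor s t ! j"
  have ce: "c = map ?h e" using c unfolding perm_comp_def by simp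
  have e': "set e = {0..<?k+?l}" "length e = ?k + ?l" "distinct e" using shuffle_facts[OF e] s' t' by auto
  have f1: "filter (\<lambda>x. x < ?k) e = [0..<?k]" and f2: "filter (\<lambda>x. ?k \<le> x) e = [?k..<?k+?l]"
    using e s' t' unfolding is_shuffle_def by auto
  have inj: "inj_on ?h (set e)" using e' tf(1,2) unfolding valid_perm_def by (simp add: inj_on_nth)
  have img: "?h ` {0..<?k+?l} = {0..<?k+?l}"
  proof -
    have "?h ` {0..<?k+?l} = set (perm_tensor s t)" using tf(2) by (auto simp: in_set_conv_nth)
    then show ?thesis using tf(5) by simp
  qed
  have vc: "valid_perm c" "length c = ?k + ?l"
    unfolding valid_perm_def ce using inj e' img by (auto simp: distinct_map)
  have ds: "distinct s" using s' unfolding valid_perm_def by simp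
  have dt: "distinct t" using t' unfolding valid_perm_def by simp
  have ss: "set s = {0..<?k}" and st: "set t = {0..<?l}" using s' t' unfolding valid_perm_def by auto
  have "resp (forest_prod F G) c"
    unfolding resp_def
  proof (intro ballI impI)
    fix x y assume x: "x \<in> set c" and y: "y \<in> set c" and r: "reach (forest_prod F G) x y"
    obtain i where i: "i \<in> set e" "x = ?h i" using x ce by auto
    obtain j where j: "j \<in> set e" "y = ?h j" using y ce by auto
    have ix: "idx c x = idx e i" "idx c y = idx e j" using idx_map[OF inj] i j ce by auto
    show "idx c y < idx c x"
    proof (cases "i < ?k")
      case True
      then have xk: "x < ?k" "x = s ! i" using tf(3) i by auto
      then have yk: "y < ?k" using reach_H_closed1[OF vF vG r] by simp
      have jk: "j < ?k"
      proof (rule ccontr)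
        assume "\<not> j < ?k"
        then show False using tf(4)[of j] j e' yk by simp
      qed
      then have ys: "y = s ! j" using tf(3) j by simp
      have "reach F (s ! i) (s ! j)" using reach_H1[OF vF vG xk(1) yk] r xk ys by simp
      then have "idx s (s ! j) < idx s (s ! i)" using s'(3) unfolding resp_def using True jk s'(2) by auto
      then have "j < i" using idx_nth[OF ds] True jk s'(2) by simp
      then have "idx (filter (\<lambda>x. x < ?k) e) j < idx (filter (\<lambda>x. x < ?k) e) i"
        unfolding f1 using True jk by (simp add: idx_upt)
      then show ?thesis using idx_filter[of "\<lambda>x. x < ?k" j i e] True jk i j ix by simp
    next
      case False
      have ik: "i < ?k + ?l" using i e' by simp
      then have xk: "?k \<le> x" "x = t ! (i - ?k) + ?k" using tf(4)[of i] False i(2) by auto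
      then have yk: "?k \<le> y" using reach_H_closed2[OF vF vG r] by simp
      have jk: "?k \<le> j" "j < ?k + ?l"
      proof -
        show "j < ?k + ?l" using j e' by simp
        show "?k \<le> j"
        proof (rule ccontr)
          assume "\<not> ?k \<le> j"
          then show False using tf(3)[of j] yk j by simp
        qed
      qed
      then have ys: "y = t ! (j - ?k) + ?k" using tf(4) j by simp
      have "i - ?k < length t" "j - ?k < length t" using ik jk False t'(2) by auto
      then have "t ! (i - ?k) \<in> set t" "t ! (j - ?k) \<in> set t" by simp_all
      then have tl: "t ! (i - ?k) < ?l" "t ! (j - ?k) < ?l" using st by auto
      have "reach G (t ! (i - ?k)) (t ! (j - ?k))" using reach_H2[OF vF vG tl] r xk ys by simp
      then have "idx t (t ! (j - ?k)) < idx t (t ! (i - ?k))"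
        using t'(3) unfolding resp_def using ik jk False t'(2) by auto
      then have "j - ?k < i - ?k" using idx_nth[OF dt] ik jk False t'(2) by simp
      then have "idx (filter (\<lambda>x. ?k \<le> x) e) j < idx (filter (\<lambda>x. ?k \<le> x) e) i"
        unfolding f2 using False ik jk by (simp add: idx_upt2)
      then show ?thesis using idx_filter[of "\<lambda>x. ?k \<le> x" j i e] False jk i j ix by simp
    qed
  qed
  then show ?thesis unfolding S_F_alt using vc len_H[OF vF vG] by simp
qed

end



context
  fixes F G :: oforest
  assumes vF: "valid_forest F" and vG: "valid_forest G"
begin

lemma T_exists:
  assumes c: "c \<in> S_F (forest_prod F G)"
  shows "\<exists>s t e. s \<in> S_F F \<and> t \<in> S_F G \<and> is_shuffle (length s) (length t) e \<and>
     perm_comp (perm_tensor s t) e = c"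
proof -
  let ?k = "length F" and ?l = "length G"
  have c': "distinct c" "set c = {0..<?k+?l}" "length c = ?k + ?l" "resp (forest_prod F G) c"
    using c len_H[OF vF vG] unfolding S_F_alt valid_perm_def by auto
  define s where "s = filter (\<lambda>x. x < ?k) c"
  define w where "w = filter (\<lambda>x. ?k \<le> x) c"
  define t where "t = map (\<lambda>x. x - ?k) w"
  have ds: "distinct s" and ss: "set s = {0..<?k}" unfolding s_def using c' by auto
  have ls: "length s = ?k" using distinct_card[OF ds] ss by simp
  have dw: "distinct w" and sw: "set w = {?k..<?k+?l}" unfolding w_def using c' by auto
  have lw: "length w = ?l" using distinct_card[OF dw] sw by simp
  have injw: "inj_on (\<lambda>x. x - ?k) (set w)" using sw by (auto simp: inj_on_def)
  have dt: "distinct t" unfolding t_def using dw injw by (simp add: distinct_map)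
  have st: "set t = {0..<?l}"
  proof -
    have "(\<lambda>x. x - ?k) ` {?k..<?k+?l} = {0..<?l}"
    proof (auto simp: image_iff)
      fix x assume "x < ?l"
      then show "\<exists>y\<in>{?k..<?k+?l}. x = y - ?k" by (intro bexI[of _ "x + ?k"]) auto
    qed
    then show ?thesis unfolding t_def using sw by simp
  qed
  have lt: "length t = ?l" unfolding t_def using lw by simp
  have wt: "map (\<lambda>x. x + ?k) t = w" unfolding t_def using sw by (auto intro!: map_idI)
  have ten: "perm_tensor s t = s @ w" unfolding perm_tensor_def ls wt ..
  have sF: "s \<in> S_F F"
  proof -
    have "resp (forest_prod F G) s" unfolding s_def by (rule resp_filter[OF c'(4)])
    moreover have "resp (forest_prod F G) s = resp F s"
      using reach_H1[OF vF vG] ss by (intro resp_cong) auto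
    ultimately show ?thesis unfolding S_F_alt valid_perm_def using ds ss ls by simp
  qed
  have tG: "t \<in> S_F G"
  proof -
    have "resp (forest_prod F G) w" unfolding w_def by (rule resp_filter[OF c'(4)])
    moreover have "resp G t = resp (forest_prod F G) w"
      unfolding t_def
    proof (rule resp_map[OF injw])
      fix x y assume "x \<in> set w" "y \<in> set w"
      then have xy: "?k \<le> x" "x < ?k + ?l" "?k \<le> y" "y < ?k + ?l" using sw by auto
      have "reach (forest_prod F G) ((x - ?k) + ?k) ((y - ?k) + ?k) = reach G (x - ?k) (y - ?k)"
        using xy by (intro reach_H2[OF vF vG]) auto
      then show "reach G (x - ?k) (y - ?k) = reach (forest_prod F G) x y" using xy by simp
    qed
    ultimately show ?thesis unfolding S_F_alt valid_perm_def using dt st lt by simp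
  qed
  define st where "st = s @ w"
  have dst: "distinct st" unfolding st_def using ds dw ss sw by auto
  have sst: "set st = set c" unfolding st_def using ss sw c' by auto
  have lst: "length st = ?k + ?l" unfolding st_def using ls lw by simp
  define e where "e = map (idx st) c"
  have inje: "inj_on (idx st) (set c)" using sst idx_inj by (metis inj_onI)
  have se: "set e = {0..<?k+?l}"
  proof
    show "set e \<subseteq> {0..<?k+?l}" unfolding e_def using idx_less sst lst by fastforce
    show "{0..<?k+?l} \<subseteq> set e"
    proof
      fix i assume "i \<in> {0..<?k+?l}"
      then have i: "i < length st" using lst by simp
      then have "idx st (st ! i) = i" using idx_nth[OF dst] by simp
      moreover have "st ! i \<in> set c" using i sst nth_mem by blast
      ultimately show "i \<in> set e" unfolding e_def by force
    qed
  qed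
  have vpe: "valid_perm e" "length e = ?k + ?l"
    unfolding valid_perm_def e_def using inje c' se[unfolded e_def] by (auto simp: distinct_map)
  have idxk: "(idx st x < ?k) = (x < ?k)" if "x \<in> set c" for x
  proof (cases "x < ?k")
    case True
    then have "x \<in> set s" using ss by simp
    then show ?thesis unfolding st_def idx_append using idx_less ls True by fastforce
  next
    case False
    then have "x \<notin> set s" using ss by simp
    then show ?thesis unfolding st_def idx_append using ls False by simp
  qed
  have f1: "filter (\<lambda>x. x < ?k) e = [0..<?k]"
  proof -
    have "filter (\<lambda>x. x < ?k) e = map (idx st) (filter (\<lambda>x. idx st x < ?k) c)"
      unfolding e_def filter_map o_def ..
    also have "filter (\<lambda>x. idx st x < ?k) c = s" unfolding s_def using idxk by (intro filter_cong) auto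
    also have "map (idx st) s = map (idx s) s" unfolding st_def idx_append by simp
    also have "\<dots> = [0..<?k]" using map_idx_self[OF ds] ls by simp
    finally show ?thesis .
  qed
  have f2: "filter (\<lambda>x. ?k \<le> x) e = [?k..<?k+?l]"
  proof -
    have "filter (\<lambda>x. ?k \<le> x) e = map (idx st) (filter (\<lambda>x. ?k \<le> idx st x) c)"
      unfolding e_def filter_map o_def ..
    also have "filter (\<lambda>x. ?k \<le> idx st x) c = w" unfolding w_def using idxk
      by (intro filter_cong) (auto simp: not_less[symmetric])
    also have "map (idx st) w = map (\<lambda>x. ?k + idx w x) w"
      unfolding st_def idx_append using ss sw ls by (intro map_cong) auto
    also have "\<dots> = map (\<lambda>i. ?k + i) (map (idx w) w)" by simp
    also have "\<dots> = [?k..<?k+?l]" unfolding map_idx_self[OF dw] lw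
      by (rule nth_equalityI) auto
    finally show ?thesis .
  qed
  have sh: "is_shuffle (length s) (length t) e"
    unfolding is_shuffle_def using vpe f1 f2 ls lt by simp
  have pc: "perm_comp (perm_tensor s t) e = c"
    unfolding perm_comp_def ten st_def[symmetric] e_def using sst
    by (auto intro!: map_idI nth_idx)
  show ?thesis using sF tG sh pc by blast
qed

lemma core1:
  "card {(s, t, e). s \<in> S_F F \<and> t \<in> S_F G \<and> is_shuffle (length s) (length t) e \<and>
     perm_comp (perm_tensor s t) e = c} = (if c \<in> S_F (forest_prod F G) then 1 else 0)"
  (is "card ?T = _")
proof (cases "c \<in> S_F (forest_prod F G)")
  case True
  then obtain s t e where ste: "(s, t, e) \<in> ?T" using T_exists by blast
  have "?T = {(s, t, e)}"
  proof (intro set_eqI iffI)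
    fix x assume "x \<in> ?T"
    then obtain s' t' e' where x: "x = (s', t', e')" and m: "(s', t', e') \<in> ?T" by (cases x) auto
    have m': "s' \<in> S_F F" "t' \<in> S_F G" "is_shuffle (length s') (length t') e'" "perm_comp (perm_tensor s' t') e' = c"
      using m by auto
    have ste': "s \<in> S_F F" "t \<in> S_F G" "is_shuffle (length s) (length t) e" "perm_comp (perm_tensor s t) e = c"
      using ste by auto
    have "s' = s \<and> t' = t"
      using T_data[OF vF vG m'] T_data[OF vF vG ste'] by simp
    moreover then have "e' = e" using T_unique[OF vF vG ste'(1-3)] ste'(4) m' by simp
    ultimately show "x \<in> {(s, t, e)}" using x by simp
  qed (use ste in simp)
  then show ?thesis using True by simp
next
  case False
  have e: "?T = {}" using T_in[OF vF vG] False by blast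
  show ?thesis using False by (subst e) simp
qed

end



definition lower :: "oforest \<Rightarrow> nat set \<Rightarrow> bool" where
  "lower F D \<longleftrightarrow> D \<subseteq> {0..<length F} \<and> (\<forall>u v. v \<in> D \<longrightarrow> reach F u v \<longrightarrow> u \<in> D)"

definition tops :: "oforest \<Rightarrow> nat set \<Rightarrow> nat set" where
  "tops F D = {v \<in> D. \<forall>w\<in>D. \<not> reach F v w}"

lemma in_set_drop_idx: "distinct s \<Longrightarrow> (x \<in> set (drop k s)) = (x \<in> set s \<and> k \<le> idx s x)"
proof
  assume d: "distinct s" and x: "x \<in> set (drop k s)"
  then obtain i where i: "i < length (drop k s)" "drop k s ! i = x" by (auto simp: in_set_conv_nth)
  then have "s ! (k + i) = x" "k + i < length s" by auto
  then show "x \<in> set s \<and> k \<le> idx s x" using idx_nth[OF d] by (metis le_add1 nth_mem)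
next
  assume d: "distinct s" and x: "x \<in> set s \<and> k \<le> idx s x"
  then have "idx s x < length s" "s ! idx s x = x" using idx_less nth_idx by auto
  then have "drop k s ! (idx s x - k) = x" "idx s x - k < length (drop k s)" using x by auto
  then show "x \<in> set (drop k s)" by (metis nth_mem)
qed

context
  fixes F :: oforest
  assumes vF: "valid_forest F"
begin

lemma reach_bounded: "reach F u v \<Longrightarrow> u < length F \<and> v < length F"
  unfolding reach_def using trancl_bounded[OF vF] by auto

lemma lea_sub: "admissible_cut F C \<Longrightarrow> lea_set F C \<subseteq> {0..<length F}"
  unfolding admissible_cut_def lea_set_def using reach_bounded by auto

lemma lea_lower: "admissible_cut F C \<Longrightarrow> lower F (lea_set F C)"
  unfolding lower_def using lea_sub unfolding lea_set_def
  using reach_trans[OF vF] by blast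

lemma tops_lea: "admissible_cut F C \<Longrightarrow> tops F (lea_set F C) = C"
  unfolding tops_def lea_set_def admissible_cut_def
  using reach_trans[OF vF] by blast

lemma exists_top:
  assumes fin: "finite D" and v: "v \<in> D"
  shows "\<exists>t\<in>tops F D. t = v \<or> reach F v t"
  using v
proof (induction "card {u\<in>D. reach F v u}" arbitrary: v rule: less_induct)
  case less
  show ?case
  proof (cases "v \<in> tops F D")
    case True then show ?thesis by blast
  next
    case False
    then obtain w where w: "w \<in> D" "reach F v w" using less.prems unfolding tops_def by blast
    have "{u\<in>D. reach F w u} \<subset> {u\<in>D. reach F v u}"
      using w reach_trans[OF vF] reach_irrefl by blast
    then have "card {u\<in>D. reach F w u} < card {u\<in>D. reach F v u}"
      using fin by (intro psubset_card_mono) auto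
    then obtain t where "t \<in> tops F D" "t = w \<or> reach F w t" using less.hyps w(1) by blast
    then show ?thesis using w reach_trans[OF vF] by blast
  qed
qed

lemma tops_adm:
  assumes "lower F D"
  shows "admissible_cut F (tops F D) \<and> lea_set F (tops F D) = D"
proof -
  have D: "D \<subseteq> {0..<length F}" using assms unfolding lower_def by simp
  have fin: "finite D" using D finite_subset by blast
  have "admissible_cut F (tops F D)" unfolding admissible_cut_def tops_def using D by blast
  moreover have "lea_set F (tops F D) \<subseteq> D" using assms unfolding lea_set_def tops_def lower_def by blast
  moreover have "D \<subseteq> lea_set F (tops F D)"
    using exists_top[OF fin] unfolding lea_set_def by blast
  ultimately show ?thesis by blast
qed

lemma lower_convex: "lower F D \<Longrightarrow> convex F D"
proof (rule convex_down)
  fix a b assume l: "lower F D" and e: "(a, b) \<in> edges F" and b: "b \<in> D"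
  have "reach F a b" using e vF unfolding reach_iff[OF vF] by auto
  then show "a \<in> D" using l b unfolding lower_def by blast
qed

lemma upper_convex: "lower F D \<Longrightarrow> convex F ({0..<length F} - D)"
proof (rule convex_up)
  fix a b assume l: "lower F D" and e: "(a, b) \<in> edges F" and a: "a \<in> {0..<length F} - D"
  have r: "reach F a b" using e vF unfolding reach_iff[OF vF] by auto
  then have "b < length F" using reach_bounded by simp
  moreover have "b \<notin> D" using l a r unfolding lower_def by blast
  ultimately show "b \<in> {0..<length F} - D" by simp
qed

lemma resp_std:
  assumes S: "set w \<subseteq> {0..<length F}" and cv: "convex F (set w)"
  shows "resp (subforest F (set w)) (standardize w) = resp F w"
  unfolding standardize_relabel
  using relabel_inj[of "set w"] reach_subforest[OF S cv]
  by (intro resp_map) auto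

end



context
  fixes F :: oforest
  assumes vF: "valid_forest F"
begin

lemma core2:
  "card {s \<in> S_F F. length a \<le> length s \<and> standardize (take (length a) s) = a \<and>
       standardize (drop (length a) s) = b}
   = card {C. admissible_cut F C \<and> a \<in> S_F (Roo F C) \<and> b \<in> S_F (Lea F C)}"
  (is "card ?L = card ?R")
proof -
  let ?n = "length F"
  define g where "g C = unstd (roo_set F C) a @ unstd (lea_set F C) b" for C
  have gprop: "g C \<in> ?L \<and> set (drop (length a) (g C)) = lea_set F C" if C: "C \<in> ?R" for C
  proof -
    let ?Rs = "roo_set F C" and ?Ls = "lea_set F C"
    have adm: "admissible_cut F C" and aR: "a \<in> S_F (Roo F C)" and bL: "b \<in> S_F (Lea F C)" using C by auto
    have low: "lower F ?Ls" using lea_lower[OF vF adm] .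
    have LS: "?Ls \<subseteq> {0..<?n}" using low unfolding lower_def by simp
    have RS: "?Rs = {0..<?n} - ?Ls" unfolding roo_set_def ..
    have finL: "finite ?Ls" and finR: "finite ?Rs" using LS finite_subset unfolding RS by auto
    have a': "valid_perm a" "length a = card ?Rs" "resp (subforest F ?Rs) a"
      using aR finR unfolding S_F_alt Roo_def by (auto simp: length_subforest)
    have b': "valid_perm b" "length b = card ?Ls" "resp (subforest F ?Ls) b"
      using bL finL unfolding S_F_alt Lea_def by (auto simp: length_subforest)
    define xs where "xs = unstd ?Rs a"
    define ys where "ys = unstd ?Ls b"
    have xs: "set xs = ?Rs" "distinct xs" "standardize xs = a"
      unfolding xs_def using set_unstd[OF finR a'(1,2)] distinct_unstd[OF finR a'(1,2)] std_unstd[OF finR a'(1,2)] by auto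
    have ys: "set ys = ?Ls" "distinct ys" "standardize ys = b"
      unfolding ys_def using set_unstd[OF finL b'(1,2)] distinct_unstd[OF finL b'(1,2)] std_unstd[OF finL b'(1,2)] by auto
    have lxs: "length xs = length a" using xs(2) xs(1) a'(2) distinct_card by fastforce
    have gC: "g C = xs @ ys" unfolding g_def xs_def ys_def ..
    have d: "distinct (xs @ ys)" using xs ys RS by auto
    have set_s: "set (xs @ ys) = {0..<?n}" using xs ys RS LS by auto
    have len_s: "length (xs @ ys) = ?n" using distinct_card[OF d] set_s by simp
    have rx: "resp F xs"
    proof -
      have "resp (subforest F (set xs)) (standardize xs) = resp F xs"
        using xs(1) RS upper_convex[OF vF low] by (intro resp_std[OF vF]) auto
      then show ?thesis using xs a'(3) by simp
    qed
    have ry: "resp F ys"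
    proof -
      have "resp (subforest F (set ys)) (standardize ys) = resp F ys"
        using ys(1) LS lower_convex[OF vF low] by (intro resp_std[OF vF]) auto
      then show ?thesis using ys b'(3) by simp
    qed
    have cross: "\<forall>x\<in>set xs. \<forall>y\<in>set ys. \<not> reach F x y"
      using xs(1) ys(1) RS low unfolding lower_def by blast
    have "resp F (xs @ ys)" using resp_append[OF d] rx ry cross by simp
    then have "xs @ ys \<in> S_F F" unfolding S_F_alt valid_perm_def using d set_s len_s by simp
    then show ?thesis using gC lxs xs ys by simp
  qed
  have inj: "inj_on g ?R"
  proof (rule inj_onI)
    fix C C' assume C: "C \<in> ?R" and C': "C' \<in> ?R" and e: "g C = g C'"
    have "lea_set F C = lea_set F C'" using gprop[OF C] gprop[OF C'] e by simp
    then show "C = C'" using tops_lea[OF vF] C C' by (metis (mono_tags, lifting) mem_Collect_eq)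
  qed
  have img: "g ` ?R = ?L"
  proof
    show "g ` ?R \<subseteq> ?L" using gprop by blast
  next
    show "?L \<subseteq> g ` ?R"
    proof
      fix s assume s: "s \<in> ?L"
      let ?k = "length a"
      have s': "valid_perm s" "length s = ?n" "resp F s" "?k \<le> length s"
        "standardize (take ?k s) = a" "standardize (drop ?k s) = b"
        using s unfolding S_F_alt by auto
      have ds: "distinct s" and ss: "set s = {0..<?n}" using s' unfolding valid_perm_def by auto
      define D where "D = set (drop ?k s)"
      have TD: "set (take ?k s) = {0..<?n} - D"
      proof -
        have "set (take ?k s) \<union> D = {0..<?n}" unfolding D_def using ss by (metis set_append append_take_drop_id)
        moreover have "set (take ?k s) \<inter> D = {}" unfolding D_def using ds
          by (metis append_take_drop_id distinct_append)
        ultimately show ?thesis by blast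
      qed
      have low: "lower F D"
        unfolding lower_def
      proof (intro conjI allI impI)
        show "D \<subseteq> {0..<?n}" unfolding D_def using ss by (metis set_drop_subset)
      next
        fix u v assume v: "v \<in> D" and r: "reach F u v"
        have u: "u \<in> set s" using reach_bounded[OF vF r] ss by simp
        have vs: "v \<in> set s" "?k \<le> idx s v" using v in_set_drop_idx[OF ds] unfolding D_def by auto
        have "idx s v < idx s u" using s'(3) u vs r unfolding resp_def by blast
        then show "u \<in> D" unfolding D_def using in_set_drop_idx[OF ds] u vs by simp
      qed
      define C where "C = tops F D"
      have adm: "admissible_cut F C" and lea: "lea_set F C = D" using tops_adm[OF vF low] unfolding C_def by auto
      have roo: "roo_set F C = set (take ?k s)" unfolding roo_set_def lea TD ..
      have dT: "distinct (take ?k s)" and dD: "distinct (drop ?k s)" using ds by auto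
      have aR: "a \<in> S_F (Roo F C)"
      proof -
        have "resp (subforest F (set (take ?k s))) (standardize (take ?k s)) = resp F (take ?k s)"
          using TD upper_convex[OF vF low] by (intro resp_std[OF vF]) auto
        moreover have "resp F (take ?k s)" using s'(3) resp_append[of "take ?k s" "drop ?k s" F] ds by simp
        moreover have "length (Roo F C) = length a"
          unfolding Roo_def roo using s'(5) valid_perm_std[OF dT] distinct_card[OF dT]
          by (simp add: length_subforest)
        ultimately show ?thesis unfolding S_F_alt Roo_def roo using s'(5) valid_perm_std[OF dT]
          by (simp add: Roo_def roo)
      qed
      have bL: "b \<in> S_F (Lea F C)"
      proof -
        have "resp (subforest F (set (drop ?k s))) (standardize (drop ?k s)) = resp F (drop ?k s)"
          using low lower_convex[OF vF low] unfolding D_def lower_def by (intro resp_std[OF vF]) auto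
        moreover have "resp F (drop ?k s)" using s'(3) resp_append[of "take ?k s" "drop ?k s" F] ds by simp
        moreover have "length (Lea F C) = length b"
          unfolding Lea_def lea D_def using s'(6) valid_perm_std[OF dD] distinct_card[OF dD]
          by (simp add: length_subforest)
        ultimately show ?thesis unfolding S_F_alt Lea_def lea D_def using s'(6) valid_perm_std[OF dD]
          by (simp add: Lea_def lea D_def)
      qed
      have "g C = s"
        unfolding g_def roo lea D_def
        using unstd_std[OF dT] unstd_std[OF dD] s'(5,6) by simp
      then show "s \<in> g ` ?R" using adm aR bL by blast
    qed
  qed
  have "bij_betw g ?R ?L" unfolding bij_betw_def using inj img by simp
  then show ?thesis by (simp add: bij_betw_same_card)
qed

end



lemma finite_S_F: "finite (S_F F)"
proof -
  have "S_F F \<subseteq> {s. set s \<subseteq> {0..<length F} \<and> length s = length F}"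
    unfolding S_F_def valid_perm_def by auto
  then show ?thesis using finite_lists_length_eq[of "{0..<length F}" "length F"] finite_subset by blast
qed

lemma finite_shuffles: "finite {e. is_shuffle k l e \<and> P e}"
proof -
  have "{e. is_shuffle k l e \<and> P e} \<subseteq> {e. set e \<subseteq> {0..<k+l} \<and> length e = k + l}"
    using shuffle_facts by auto
  then show ?thesis using finite_lists_length_eq[of "{0..<k+l}" "k+l"] finite_subset by blast
qed

lemma core1_sum:
  assumes vF: "valid_forest F" and vG: "valid_forest G"
  shows "(\<Sum>s\<in>S_F F. \<Sum>t\<in>S_F G. card {e. is_shuffle (length s) (length t) e \<and>
     perm_comp (perm_tensor s t) e = c}) = (if c \<in> S_F (forest_prod F G) then 1 else 0)"
proof -
  have "{(s, t, e). s \<in> S_F F \<and> t \<in> S_F G \<and> is_shuffle (length s) (length t) e \<and>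
     perm_comp (perm_tensor s t) e = c} = (SIGMA s:S_F F. SIGMA t:S_F G. {e. is_shuffle (length s) (length t) e \<and>
     perm_comp (perm_tensor s t) e = c})" by auto
  then have "card (SIGMA s:S_F F. SIGMA t:S_F G. {e. is_shuffle (length s) (length t) e \<and>
     perm_comp (perm_tensor s t) e = c}) = (if c \<in> S_F (forest_prod F G) then 1 else 0)"
    using core1[OF vF vG, of c] by simp
  then show ?thesis using finite_S_F finite_shuffles by (simp add: card_SigmaI)
qed

lemma lin_superset:
  assumes "finite A" "supp x \<subseteq> A"
  shows "lin f x c = (\<Sum>a\<in>A. x a * f a c)"
  unfolding lin_def using assms by (intro sum.mono_neutral_left) (auto simp: supp_def)

lemma bilin_superset:
  assumes "finite A" "supp x \<subseteq> A" "finite B" "supp y \<subseteq> B"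
  shows "bilin m x y c = (\<Sum>a\<in>A. \<Sum>b\<in>B. x a * y b * m a b c)"
proof -
  have "bilin m x y c = (\<Sum>(a, b)\<in>A \<times> B. x a * y b * m a b c)"
    unfolding bilin_def using assms by (intro sum.mono_neutral_left) (auto simp: supp_def)
  then show ?thesis by (simp add: sum.cartesian_product)
qed

lemma Theta_apply: "finite A \<Longrightarrow> supp x \<subseteq> A \<Longrightarrow> Theta x s = (\<Sum>a\<in>A. x a * Theta_basis a s)"
  unfolding Theta_def by (rule lin_superset)

lemma supp_Theta: "supp (Theta x) \<subseteq> (\<Union>a\<in>supp x. S_F a)"
proof
  fix s assume "s \<in> supp (Theta x)"
  then have "(\<Sum>a\<in>supp x. x a * Theta_basis a s) \<noteq> 0" unfolding supp_def Theta_def lin_def by simp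
  then obtain a where "a \<in> supp x" "x a * Theta_basis a s \<noteq> 0" by (meson sum.neutral)
  then show "s \<in> (\<Union>a\<in>supp x. S_F a)" unfolding Theta_basis_def by (auto split: if_splits)
qed

lemma finite_U: "finite A \<Longrightarrow> finite (\<Union>a\<in>A. S_F a)"
  using finite_S_F by blast




lemma sum_indicator_S:
  fixes g :: "perm_word \<Rightarrow> 'k::comm_ring_1"
  assumes "finite U" "S_F a \<subseteq> U"
  shows "(\<Sum>s\<in>U. Theta_basis a s * g s) = (\<Sum>s\<in>S_F a. g s)"
proof -
  have "(\<Sum>s\<in>U. Theta_basis a s * g s) = (\<Sum>s\<in>U. if s \<in> S_F a then g s else 0)"
    unfolding Theta_basis_def by (intro sum.cong) auto
  also have "\<dots> = (\<Sum>s\<in>{s\<in>U. s \<in> S_F a}. g s)" using assms(1) by (simp add: sum.inter_filter)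
  also have "{s\<in>U. s \<in> S_F a} = S_F a" using assms(2) by auto
  finally show ?thesis .
qed

lemma sum4_swap: "(\<Sum>s\<in>U. \<Sum>t\<in>V. \<Sum>a\<in>A. \<Sum>b\<in>B. f s t a b) = (\<Sum>a\<in>A. \<Sum>b\<in>B. \<Sum>s\<in>U. \<Sum>t\<in>V. f s t a b)"
proof -
  have "(\<Sum>s\<in>U. \<Sum>t\<in>V. \<Sum>a\<in>A. \<Sum>b\<in>B. f s t a b) = (\<Sum>s\<in>U. \<Sum>a\<in>A. \<Sum>t\<in>V. \<Sum>b\<in>B. f s t a b)"
    by (rule sum.cong[OF refl], rule sum.swap)
  also have "\<dots> = (\<Sum>s\<in>U. \<Sum>a\<in>A. \<Sum>b\<in>B. \<Sum>t\<in>V. f s t a b)"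
    by (rule sum.cong[OF refl], rule sum.cong[OF refl], rule sum.swap)
  also have "\<dots> = (\<Sum>a\<in>A. \<Sum>s\<in>U. \<Sum>b\<in>B. \<Sum>t\<in>V. f s t a b)"
    by (rule sum.swap)
  also have "\<dots> = (\<Sum>a\<in>A. \<Sum>b\<in>B. \<Sum>s\<in>U. \<Sum>t\<in>V. f s t a b)"
    by (rule sum.cong[OF refl], rule sum.swap)
  finally show ?thesis .
qed

lemma Theta_mult:
  fixes x y :: "oforest \<Rightarrow> 'k::comm_ring_1"
  assumes x: "Ho_elem x" and y: "Ho_elem y"
  shows "Theta (Ho_mult x y) = FQ_mult (Theta x) (Theta y)"
proof
  fix c
  let ?A = "supp x" and ?B = "supp y"
  have fA: "finite ?A" and fB: "finite ?B" and vA: "\<And>a. a \<in> ?A \<Longrightarrow> valid_forest a"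
    and vB: "\<And>b. b \<in> ?B \<Longrightarrow> valid_forest b" using x y unfolding Ho_elem_def by auto
  define P where "P = (\<lambda>(a, b). forest_prod a b) ` (?A \<times> ?B)"
  have fP: "finite P" unfolding P_def using fA fB by simp
  have z: "Ho_mult x y G = (\<Sum>a\<in>?A. \<Sum>b\<in>?B. x a * y b * (if G = forest_prod a b then 1 else 0))" for G
    unfolding Ho_mult_def Ho_mult_basis_def basis_vec_def
    using bilin_superset[OF fA order_refl fB order_refl, where m = "\<lambda>F G c. if c = forest_prod F G then (1::'k) else 0" and c = G] by simp
  have sz: "supp (Ho_mult x y) \<subseteq> P"
  proof
    fix G assume "G \<in> supp (Ho_mult x y)"
    then have "Ho_mult x y G \<noteq> 0" unfolding supp_def by simp
    then obtain a b where "a \<in> ?A" "b \<in> ?B" "x a * y b * (if G = forest_prod a b then 1 else 0) \<noteq> (0::'k)"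
      unfolding z by (meson sum.neutral)
    then show "G \<in> P" unfolding P_def by (auto split: if_splits)
  qed
  have "Theta (Ho_mult x y) c = (\<Sum>G\<in>P. Ho_mult x y G * Theta_basis G c)"
    by (rule Theta_apply[OF fP sz])
  also have "\<dots> = (\<Sum>G\<in>P. \<Sum>a\<in>?A. \<Sum>b\<in>?B. (if G = forest_prod a b then x a * y b * Theta_basis G c else 0))"
    unfolding z sum_distrib_right by (intro sum.cong refl) auto
  also have "\<dots> = (\<Sum>a\<in>?A. \<Sum>b\<in>?B. \<Sum>G\<in>P. (if G = forest_prod a b then x a * y b * Theta_basis G c else 0))"
    by (subst sum.swap) (subst (2) sum.swap, rule refl)
  also have "\<dots> = (\<Sum>a\<in>?A. \<Sum>b\<in>?B. x a * y b * Theta_basis (forest_prod a b) c)"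
  proof (intro sum.cong refl)
    fix a b assume "a \<in> ?A" "b \<in> ?B"
    then have "forest_prod a b \<in> P" unfolding P_def by auto
    then show "(\<Sum>G\<in>P. (if G = forest_prod a b then x a * y b * Theta_basis G c else 0)) =
        x a * y b * Theta_basis (forest_prod a b) c" using fP by simp
  qed
  finally have L: "Theta (Ho_mult x y) c = (\<Sum>a\<in>?A. \<Sum>b\<in>?B. x a * y b * Theta_basis (forest_prod a b) c)" .
  define UA where "UA = (\<Union>a\<in>?A. S_F a)"
  define UB where "UB = (\<Union>b\<in>?B. S_F b)"
  have fUA: "finite UA" and fUB: "finite UB" unfolding UA_def UB_def using fA fB finite_U by auto
  have "FQ_mult (Theta x) (Theta y) c = (\<Sum>s\<in>UA. \<Sum>t\<in>UB. Theta x s * Theta y t * FQ_mult_basis s t c)"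
    unfolding FQ_mult_def UA_def UB_def using fUA fUB supp_Theta
    by (intro bilin_superset) (auto simp: UA_def UB_def)
  also have "\<dots> = (\<Sum>s\<in>UA. \<Sum>t\<in>UB. \<Sum>a\<in>?A. \<Sum>b\<in>?B. x a * y b * (Theta_basis a s * (Theta_basis b t * FQ_mult_basis s t c)))"
  proof -
    have eq: "Theta x s * Theta y t * FQ_mult_basis s t c = (\<Sum>a\<in>?A. \<Sum>b\<in>?B. x a * y b * (Theta_basis a s * (Theta_basis b t * FQ_mult_basis s t c)))" for s t
      unfolding Theta_apply[OF fA order_refl] Theta_apply[OF fB order_refl] sum_distrib_right sum_distrib_left
      by (subst sum.swap, rule sum.cong[OF refl], rule sum.cong[OF refl]) (simp add: mult_ac)
    show ?thesis by (simp only: eq)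
  qed
  also have "\<dots> = (\<Sum>a\<in>?A. \<Sum>b\<in>?B. \<Sum>s\<in>UA. \<Sum>t\<in>UB. x a * y b * (Theta_basis a s * (Theta_basis b t * FQ_mult_basis s t c)))"
    by (rule sum4_swap)
  also have "\<dots> = (\<Sum>a\<in>?A. \<Sum>b\<in>?B. x a * y b * (\<Sum>s\<in>UA. Theta_basis a s * (\<Sum>t\<in>UB. Theta_basis b t * FQ_mult_basis s t c)))"
    by (simp add: sum_distrib_left)
  also have "\<dots> = (\<Sum>a\<in>?A. \<Sum>b\<in>?B. x a * y b * Theta_basis (forest_prod a b) c)"
  proof (intro sum.cong refl)
    fix a b assume a: "a \<in> ?A" and b: "b \<in> ?B"
    have sa: "S_F a \<subseteq> UA" and sb: "S_F b \<subseteq> UB" unfolding UA_def UB_def using a b by auto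
    have "(\<Sum>s\<in>UA. Theta_basis a s * (\<Sum>t\<in>UB. Theta_basis b t * FQ_mult_basis s t c))
        = (\<Sum>s\<in>S_F a. \<Sum>t\<in>S_F b. (FQ_mult_basis s t c :: 'k))"
      by (simp only: sum_indicator_S[OF fUA sa] sum_indicator_S[OF fUB sb])
    also have "\<dots> = of_nat (\<Sum>s\<in>S_F a. \<Sum>t\<in>S_F b. card {e. is_shuffle (length s) (length t) e \<and>
     perm_comp (perm_tensor s t) e = c})"
      unfolding FQ_mult_basis_def by simp
    also have "\<dots> = Theta_basis (forest_prod a b) c"
      unfolding core1_sum[OF vA[OF a] vB[OF b]] Theta_basis_def by simp
    finally show "x a * y b * (\<Sum>s\<in>UA. Theta_basis a s * (\<Sum>t\<in>UB. Theta_basis b t * FQ_mult_basis s t c))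
        = x a * y b * Theta_basis (forest_prod a b) c" by simp
  qed
  finally show "Theta (Ho_mult x y) c = FQ_mult (Theta x) (Theta y) c" using L by simp
qed



lemma length_std: "length (standardize w) = length w"
  unfolding standardize_def by simp

lemma core2_sum:
  assumes vF: "valid_forest F"
  shows "(\<Sum>s\<in>S_F F. card {k. k \<le> length s \<and> standardize (take k s) = p \<and> standardize (drop k s) = q})
    = card {C. admissible_cut F C \<and> p \<in> S_F (Roo F C) \<and> q \<in> S_F (Lea F C)}"
proof -
  have "card {k. k \<le> length s \<and> standardize (take k s) = p \<and> standardize (drop k s) = q}
      = (if length p \<le> length s \<and> standardize (take (length p) s) = p \<and> standardize (drop (length p) s) = q then 1 else 0)" for s
  proof -
    have "{k. k \<le> length s \<and> standardize (take k s) = p \<and> standardize (drop k s) = q}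
      = (if length p \<le> length s \<and> standardize (take (length p) s) = p \<and> standardize (drop (length p) s) = q then {length p} else {})"
    proof -
      have uniq: "k = length p" if "k \<le> length s" "standardize (take k s) = p" for k
      proof -
        have "length (standardize (take k s)) = k" using that(1) by (simp add: length_std)
        then show ?thesis using that(2) by simp
      qed
      show ?thesis
      proof (cases "length p \<le> length s \<and> standardize (take (length p) s) = p \<and> standardize (drop (length p) s) = q")
        case True
        show ?thesis
        proof (rule set_eqI, rule iffI)
          fix k assume "k \<in> {k. k \<le> length s \<and> standardize (take k s) = p \<and> standardize (drop k s) = q}"
          then show "k \<in> (if length p \<le> length s \<and> standardize (take (length p) s) = p \<and> standardize (drop (length p) s) = q then {length p} else {})"
            using True uniq by auto
        next
          fix k assume "k \<in> (if length p \<le> length s \<and> standardize (take (length p) s) = p \<and> standardize (drop (length p) s) = q then {length p} else {})"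
          then show "k \<in> {k. k \<le> length s \<and> standardize (take k s) = p \<and> standardize (drop k s) = q}"
            using True by simp
        qed
      next
        case False
        show ?thesis
        proof (rule set_eqI, rule iffI)
          fix k assume k: "k \<in> {k. k \<le> length s \<and> standardize (take k s) = p \<and> standardize (drop k s) = q}"
          then have "k = length p" using uniq by blast
          then show "k \<in> (if length p \<le> length s \<and> standardize (take (length p) s) = p \<and> standardize (drop (length p) s) = q then {length p} else {})"
            using False k by simp
        next
          fix k assume "k \<in> (if length p \<le> length s \<and> standardize (take (length p) s) = p \<and> standardize (drop (length p) s) = q then {length p} else {})"
          then show "k \<in> {k. k \<le> length s \<and> standardize (take k s) = p \<and> standardize (drop k s) = q}"
            using False by simp
        qed
      qed
    qed
    then show ?thesis by simp
  qed
  note cardeq = this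
  have "(\<Sum>s\<in>S_F F. card {k. k \<le> length s \<and> standardize (take k s) = p \<and> standardize (drop k s) = q})
     = (\<Sum>s\<in>S_F F. if length p \<le> length s \<and> standardize (take (length p) s) = p \<and> standardize (drop (length p) s) = q then 1 else 0)"
    by (rule sum.cong[OF refl], rule cardeq)
  also have "\<dots> = card {s \<in> S_F F. length p \<le> length s \<and> standardize (take (length p) s) = p \<and> standardize (drop (length p) s) = q}"
    using finite_S_F by (simp add: sum.inter_filter[symmetric])
  also have "\<dots> = card {C. admissible_cut F C \<and> p \<in> S_F (Roo F C) \<and> q \<in> S_F (Lea F C)}"
    by (rule core2[OF vF])
  finally show ?thesis .
qed

lemma finite_cuts: "finite {C. admissible_cut F C}"
proof -
  have "{C. admissible_cut F C} \<subseteq> Pow {0..<length F}" unfolding admissible_cut_def by auto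
  then show ?thesis using finite_subset by blast
qed

lemma coprod_count:
  assumes fV: "finite V" and sV: "(\<lambda>C. (Roo F C, Lea F C)) ` {C. admissible_cut F C} \<subseteq> V"
  shows "(\<Sum>y\<in>V. card {C. admissible_cut F C \<and> (Roo F C, Lea F C) = y} *
        (if p \<in> S_F (fst y) \<and> q \<in> S_F (snd y) then 1 else 0))
     = card {C. admissible_cut F C \<and> p \<in> S_F (Roo F C) \<and> q \<in> S_F (Lea F C)}"
proof -
  let ?h = "\<lambda>C. (Roo F C, Lea F C)"
  define M where "M = {C. admissible_cut F C \<and> p \<in> S_F (Roo F C) \<and> q \<in> S_F (Lea F C)}"
  have "M \<subseteq> {C. admissible_cut F C}" unfolding M_def by blast
  then have fM: "finite M" using finite_cuts finite_subset by blast
  have "card M = (\<Sum>C\<in>M. 1)" by simp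
  also have "\<dots> = (\<Sum>y\<in>?h ` M. \<Sum>C\<in>{C. C \<in> M \<and> ?h C = y}. 1)"
    by (rule sum.image_gen[OF fM])
  also have "\<dots> = (\<Sum>y\<in>?h ` M. card {C. C \<in> M \<and> ?h C = y})" by simp
  also have "\<dots> = (\<Sum>y\<in>V. card {C. C \<in> M \<and> ?h C = y})"
  proof (rule sum.mono_neutral_left[OF fV])
    show "?h ` M \<subseteq> V" using sV unfolding M_def by auto
    show "\<forall>i\<in>V - ?h ` M. card {C. C \<in> M \<and> ?h C = i} = 0"
    proof
      fix i assume "i \<in> V - ?h ` M"
      then have "{C. C \<in> M \<and> ?h C = i} = {}" by blast
      then show "card {C. C \<in> M \<and> ?h C = i} = 0" by (simp only: card.empty)
    qed
  qed
  also have "\<dots> = (\<Sum>y\<in>V. card {C. admissible_cut F C \<and> (Roo F C, Lea F C) = y} *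
        (if p \<in> S_F (fst y) \<and> q \<in> S_F (snd y) then 1 else 0))"
  proof (rule sum.cong[OF refl])
    fix y :: "oforest \<times> oforest"
    show "card {C. C \<in> M \<and> ?h C = y} = card {C. admissible_cut F C \<and> (Roo F C, Lea F C) = y} *
        (if p \<in> S_F (fst y) \<and> q \<in> S_F (snd y) then 1 else 0)"
    proof (cases "p \<in> S_F (fst y) \<and> q \<in> S_F (snd y)")
      case True
      then have "{C. C \<in> M \<and> ?h C = y} = {C. admissible_cut F C \<and> (Roo F C, Lea F C) = y}"
        unfolding M_def by auto
      then show ?thesis using True by simp
    next
      case False
      have e: "{C. C \<in> M \<and> ?h C = y} = {}" using False unfolding M_def by auto
      show ?thesis using False by (subst e) auto
    qed
  qed
  finally show ?thesis unfolding M_def by simp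
qed



lemma Theta_coprod:
  fixes x :: "oforest \<Rightarrow> 'k::comm_ring_1"
  assumes x: "Ho_elem x"
  shows "FQ_coprod (Theta x) = tensor_map Theta_basis Theta_basis (Ho_coprod x)"
proof
  fix y :: "perm_word \<times> perm_word"
  obtain p q where y: "y = (p, q)" by (cases y) auto
  let ?A = "supp x"
  have fA: "finite ?A" and vA: "\<And>a. a \<in> ?A \<Longrightarrow> valid_forest a" using x unfolding Ho_elem_def by auto
  define UA where "UA = (\<Union>a\<in>?A. S_F a)"
  have fUA: "finite UA" unfolding UA_def using fA finite_U by auto
  define N where "N a = card {C. admissible_cut a C \<and> p \<in> S_F (Roo a C) \<and> q \<in> S_F (Lea a C)}" for a
  have "FQ_coprod (Theta x) (p, q) = (\<Sum>s\<in>UA. Theta x s * FQ_coprod_basis s (p, q))"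
    unfolding FQ_coprod_def using fUA supp_Theta[of x] by (intro lin_superset) (auto simp: UA_def)
  also have "\<dots> = (\<Sum>s\<in>UA. \<Sum>a\<in>?A. x a * (Theta_basis a s * FQ_coprod_basis s (p, q)))"
    unfolding Theta_apply[OF fA order_refl] sum_distrib_right by (simp add: mult_ac)
  also have "\<dots> = (\<Sum>a\<in>?A. x a * (\<Sum>s\<in>UA. Theta_basis a s * FQ_coprod_basis s (p, q)))"
    by (subst sum.swap) (simp add: sum_distrib_left)
  also have "\<dots> = (\<Sum>a\<in>?A. x a * of_nat (N a))"
  proof (rule sum.cong[OF refl])
    fix a assume a: "a \<in> ?A"
    have sa: "S_F a \<subseteq> UA" unfolding UA_def using a by auto
    have "(\<Sum>s\<in>UA. Theta_basis a s * FQ_coprod_basis s (p, q)) = (\<Sum>s\<in>S_F a. (FQ_coprod_basis s (p, q) :: 'k))"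
      by (rule sum_indicator_S[OF fUA sa])
    also have "\<dots> = of_nat (\<Sum>s\<in>S_F a. card {k. k \<le> length s \<and> standardize (take k s) = p \<and> standardize (drop k s) = q})"
      unfolding FQ_coprod_basis_def by simp
    also have "\<dots> = of_nat (N a)" unfolding N_def core2_sum[OF vA[OF a]] ..
    finally show "x a * (\<Sum>s\<in>UA. Theta_basis a s * FQ_coprod_basis s (p, q)) = x a * of_nat (N a)" by simp
  qed
  finally have L: "FQ_coprod (Theta x) (p, q) = (\<Sum>a\<in>?A. x a * of_nat (N a))" .
  define V where "V = (\<Union>a\<in>?A. (\<lambda>C. (Roo a C, Lea a C)) ` {C. admissible_cut a C})"
  have fV: "finite V" unfolding V_def using fA finite_cuts by auto
  have z: "Ho_coprod x y' = (\<Sum>a\<in>?A. x a * Ho_coprod_basis a y')" for y'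
    unfolding Ho_coprod_def lin_def ..
  have sz: "supp (Ho_coprod x) \<subseteq> V"
  proof
    fix y' assume "y' \<in> supp (Ho_coprod x)"
    then have "(\<Sum>a\<in>?A. x a * Ho_coprod_basis a y') \<noteq> (0::'k)" unfolding supp_def z by simp
    then obtain a where a: "a \<in> ?A" "x a * Ho_coprod_basis a y' \<noteq> (0::'k)" by (meson sum.neutral)
    obtain A1 A2 where y': "y' = (A1, A2)" by (cases y') auto
    have "card {C. admissible_cut a C \<and> Roo a C = A1 \<and> Lea a C = A2} \<noteq> 0"
    proof
      assume c0: "card {C. admissible_cut a C \<and> Roo a C = A1 \<and> Lea a C = A2} = 0"
      have "x a * Ho_coprod_basis a y' = (0::'k)" unfolding y' Ho_coprod_basis_def using c0 by simp
      then show False using a(2) by simp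
    qed
    then obtain C where "admissible_cut a C" "Roo a C = A1" "Lea a C = A2"
      by (metis (mono_tags, lifting) Collect_empty_eq card.empty)
    then show "y' \<in> V" unfolding V_def y' using a(1) by blast
  qed
  define g where "g y' = (Theta_basis (fst y') p * Theta_basis (snd y') q :: 'k)" for y'
  have "tensor_map Theta_basis Theta_basis (Ho_coprod x) (p, q) = (\<Sum>y'\<in>V. Ho_coprod x y' * g y')"
    unfolding tensor_map_def lin_superset[OF fV sz] by (simp add: g_def case_prod_unfold)
  also have "\<dots> = (\<Sum>y'\<in>V. \<Sum>a\<in>?A. x a * (Ho_coprod_basis a y' * g y'))"
    unfolding z sum_distrib_right by (simp add: mult_ac)
  also have "\<dots> = (\<Sum>a\<in>?A. x a * (\<Sum>y'\<in>V. Ho_coprod_basis a y' * g y'))"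
    by (subst sum.swap) (simp add: sum_distrib_left)
  also have "\<dots> = (\<Sum>a\<in>?A. x a * of_nat (N a))"
  proof (rule sum.cong[OF refl])
    fix a assume a: "a \<in> ?A"
    have sV: "(\<lambda>C. (Roo a C, Lea a C)) ` {C. admissible_cut a C} \<subseteq> V" unfolding V_def using a by blast
    have "Ho_coprod_basis a y' * g y' = (of_nat (card {C. admissible_cut a C \<and> (Roo a C, Lea a C) = y'} *
        (if p \<in> S_F (fst y') \<and> q \<in> S_F (snd y') then 1 else 0)) :: 'k)" for y'
      unfolding Ho_coprod_basis_def g_def Theta_basis_def by (cases y') auto
    then have "(\<Sum>y'\<in>V. Ho_coprod_basis a y' * g y') = of_nat (\<Sum>y'\<in>V. card {C. admissible_cut a C \<and> (Roo a C, Lea a C) = y'} *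
        (if p \<in> S_F (fst y') \<and> q \<in> S_F (snd y') then 1 else 0))"
      by simp
    also have "\<dots> = of_nat (N a)" unfolding N_def coprod_count[OF fV sV] ..
    finally show "x a * (\<Sum>y'\<in>V. Ho_coprod_basis a y' * g y') = x a * of_nat (N a)" by simp
  qed
  finally show "FQ_coprod (Theta x) y = tensor_map Theta_basis Theta_basis (Ho_coprod x) y"
    using L y by simp
qed

lemma S_F_Nil: "S_F [] = {[]}"
  unfolding S_F_def valid_perm_def resp_def by auto

lemma Nil_in_S_F: "([] \<in> S_F a) = (a = [])"
  unfolding S_F_def valid_perm_def by auto

lemma Theta_unit: "Theta (Ho_unit :: oforest \<Rightarrow> 'k::comm_ring_1) = FQ_unit"
proof
  fix c
  have s: "supp (Ho_unit :: oforest \<Rightarrow> 'k) \<subseteq> {[]}" unfolding Ho_unit_def supp_def basis_vec_def by auto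
  have "Theta (Ho_unit :: oforest \<Rightarrow> 'k) c = (Ho_unit :: oforest \<Rightarrow> 'k) [] * Theta_basis [] c"
    using Theta_apply[OF _ s] by simp
  also have "\<dots> = FQ_unit c"
    unfolding Ho_unit_def FQ_unit_def basis_vec_def Theta_basis_def S_F_Nil by simp
  finally show "Theta (Ho_unit :: oforest \<Rightarrow> 'k) c = FQ_unit c" .
qed

lemma Theta_counit:
  fixes x :: "oforest \<Rightarrow> 'k::comm_ring_1"
  assumes x: "Ho_elem x"
  shows "FQ_counit (Theta x) = Ho_counit x"
proof -
  have fA: "finite (insert [] (supp x))" using x unfolding Ho_elem_def by auto
  have "FQ_counit (Theta x) = (\<Sum>a\<in>insert [] (supp x). x a * Theta_basis a [])"
    unfolding FQ_counit_def using Theta_apply[OF fA] by auto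
  also have "\<dots> = (\<Sum>a\<in>insert [] (supp x). if a = [] then x a else 0)"
    unfolding Theta_basis_def Nil_in_S_F by (intro sum.cong) auto
  also have "\<dots> = x []" using fA by simp
  finally show ?thesis unfolding Ho_counit_def .
qed

lemma Theta_degree:
  fixes x :: "oforest \<Rightarrow> 'k::comm_ring_1"
  assumes "\<forall>F\<in>supp x. length F = n"
  shows "\<forall>s\<in>supp (Theta x). length s = n"
proof
  fix s assume "s \<in> supp (Theta x)"
  then obtain a where "a \<in> supp x" "s \<in> S_F a" using supp_Theta[of x] by blast
  then show "length s = n" using assms unfolding S_F_def by auto
qed

lemma Theta_Hopf_generic: "Theta_Hopf_morphism TYPE('k::comm_ring_1)"
  unfolding Theta_Hopf_morphism_def
  using Theta_mult Theta_unit Theta_coprod Theta_counit Theta_degree by blast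

theorem mainTheorem4:
  shows "Theta_Hopf_morphism TYPE(real) \<and> Theta_Hopf_morphism TYPE(complex)"
  by (simp add: Theta_Hopf_generic)


end
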